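(* Let $F$ be a field of characteristic zero, $H$ an abelian group, and $A=\bigoplus_{h\in H}A_h$ an associative $H$-graded algebra whose $H$-grading is regular, with the function $\theta:H\times H\to F^*$ from the definition of regularity. Then $\theta$ is a skew-symmetric bicharacter and $A$ is $\theta$-commutative, i.e., $A$ is an $H$-graded color commutative superalgebra.
   Context: $H$ is written additively. An $H$-grading on $A$ is regular if (1) for every $n$ and every $(h_1,\dots,h_n)\in H^n$ there exist $a_i\in A_{h_i}$ with $a_1\cdots a_n\neq0$, and (2) for all $g,h\in H$ there exists $\theta(g,h)\in F^*$ such that $ab=\theta(g,h)ba$ for all $a\in A_g$, $b\in A_h$. A skew-symmetric bicharacter is a map $\beta:H\times H\to F^*$ with $\beta(g+h,k)=\beta(g,k)\beta(h,k)$, $\beta(g,h+k)=\beta(g,h)\beta(g,k)$, $\beta(g,h)=\beta(h,g)^{-1}$; $A$ is $\beta$-commutative (a color commutative superalgebra) if $ab=\beta(g,h)ba$ for all $a\in A_g$, $b\in A_h$. *)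

theory Defs
  imports Main "HOL.Modules"
begin

fun nprod :: "'a::semigroup_mult list \<Rightarrow> 'a" where
  "nprod [] = undefined"
| "nprod [a] = a"
| "nprod (a # b # as) = a * nprod (b # as)"

definition assoc_algebra :: "('k::field \<Rightarrow> 'a::ring \<Rightarrow> 'a) \<Rightarrow> bool" where
  "assoc_algebra scale \<longleftrightarrow> module scale \<and>
     (\<forall>c a b. scale c (a * b) = scale c a * b \<and> scale c (a * b) = a * scale c b)"

definition graded_algebra :: "('k::field \<Rightarrow> 'a::ring \<Rightarrow> 'a) \<Rightarrow> ('h::ab_group_add \<Rightarrow> 'a set) \<Rightarrow> bool" where
  "graded_algebra scale A \<longleftrightarrow> assoc_algebra scale \<and>
     (\<forall>h. module.subspace scale (A h)) \<and>
     (\<forall>x. \<exists>!f. finite {h. f h \<noteq> 0} \<and> (\<forall>h. f h \<in> A h) \<and> x = sum f {h. f h \<noteq> 0}) \<and>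
     (\<forall>g h a b. a \<in> A g \<longrightarrow> b \<in> A h \<longrightarrow> a * b \<in> A (g + h))"

definition regular_grading :: "('k::field \<Rightarrow> 'a::ring \<Rightarrow> 'a) \<Rightarrow> ('h::ab_group_add \<Rightarrow> 'a set) \<Rightarrow> ('h \<Rightarrow> 'h \<Rightarrow> 'k) \<Rightarrow> bool" where
  "regular_grading scale A \<theta> \<longleftrightarrow>
     (\<forall>hs. hs \<noteq> [] \<longrightarrow> (\<exists>as. length as = length hs \<and> (\<forall>i<length hs. as ! i \<in> A (hs ! i)) \<and> nprod as \<noteq> 0)) \<and>
     (\<forall>g h. \<theta> g h \<noteq> 0 \<and> (\<forall>a b. a \<in> A g \<longrightarrow> b \<in> A h \<longrightarrow> a * b = scale (\<theta> g h) (b * a)))"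

definition skew_symmetric_bicharacter :: "('h::ab_group_add \<Rightarrow> 'h \<Rightarrow> 'k::field) \<Rightarrow> bool" where
  "skew_symmetric_bicharacter \<beta> \<longleftrightarrow>
     (\<forall>g h. \<beta> g h \<noteq> 0) \<and>
     (\<forall>g h k. \<beta> (g + h) k = \<beta> g k * \<beta> h k) \<and>
     (\<forall>g h k. \<beta> g (h + k) = \<beta> g h * \<beta> g k) \<and>
     (\<forall>g h. \<beta> g h = inverse (\<beta> h g))"

definition color_commutative :: "('k::field \<Rightarrow> 'a::ring \<Rightarrow> 'a) \<Rightarrow> ('h::ab_group_add \<Rightarrow> 'a set) \<Rightarrow> ('h \<Rightarrow> 'h \<Rightarrow> 'k) \<Rightarrow> bool" where
  "color_commutative scale A \<beta> \<longleftrightarrow>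
     (\<forall>g h a b. a \<in> A g \<longrightarrow> b \<in> A h \<longrightarrow> a * b = scale (\<beta> g h) (b * a))"

end

theory Submission
  imports Defs "HOL.Vector_Spaces"
begin

lemma len2: "length xs = 2 \<Longrightarrow> \<exists>a b. xs = [a,b]"
  by (cases xs; cases "tl xs") auto

lemma len3: "length xs = 3 \<Longrightarrow> \<exists>a b c. xs = [a,b,c]"
  by (cases xs; cases "tl xs"; cases "tl (tl xs)") auto

lemma vs_of_module: "module (scale :: 'k::field \<Rightarrow> 'a::ab_group_add \<Rightarrow> 'a) \<Longrightarrow> vector_space scale"
  unfolding module_def by (rule vector_space.intro) auto

theorem mainTheorem11:
  fixes scale :: "'k::field_char_0 \<Rightarrow> 'a::ring \<Rightarrow> 'a"
    and A :: "'h::ab_group_add \<Rightarrow> 'a set"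
    and \<theta> :: "'h \<Rightarrow> 'h \<Rightarrow> 'k"
  assumes "graded_algebra scale A"
    and "regular_grading scale A \<theta>"
  shows "skew_symmetric_bicharacter \<theta> \<and> color_commutative scale A \<theta>"
proof -
  have mod: "module scale" and sl: "\<And>c a b. scale c (a * b) = scale c a * b"
    and sr: "\<And>c a b. scale c (a * b) = a * scale c b"
    and mul: "\<And>g h a b. a \<in> A g \<Longrightarrow> b \<in> A h \<Longrightarrow> a * b \<in> A (g + h)"
  proof -
    note G = assms(1)[unfolded graded_algebra_def assoc_algebra_def]
    show "module scale" using G by (elim conjE)
    show "\<And>c a b. scale c (a * b) = scale c a * b" using G by (elim conjE) blast
    show "\<And>c a b. scale c (a * b) = a * scale c b" using G by (elim conjE) blast
    show "\<And>g h a b. a \<in> A g \<Longrightarrow> b \<in> A h \<Longrightarrow> a * b \<in> A (g + h)" using G by (elim conjE) blast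
  qed
  interpret vs: vector_space scale using vs_of_module[OF mod] .
  have ex: "\<And>hs. hs \<noteq> [] \<Longrightarrow> \<exists>as. length as = length hs \<and> (\<forall>i<length hs. as ! i \<in> A (hs ! i)) \<and> nprod as \<noteq> 0"
    and nz: "\<And>g h. \<theta> g h \<noteq> 0"
    and com: "\<And>g h a b. a \<in> A g \<Longrightarrow> b \<in> A h \<Longrightarrow> a * b = scale (\<theta> g h) (b * a)"
  proof -
    note R = assms(2)[unfolded regular_grading_def]
    show "\<And>hs. hs \<noteq> [] \<Longrightarrow> \<exists>as. length as = length hs \<and> (\<forall>i<length hs. as ! i \<in> A (hs ! i)) \<and> nprod as \<noteq> 0"
      using R by (elim conjE) blast
    show "\<And>g h. \<theta> g h \<noteq> 0" using R by (elim conjE) blast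
    show "\<And>g h a b. a \<in> A g \<Longrightarrow> b \<in> A h \<Longrightarrow> a * b = scale (\<theta> g h) (b * a)"
      using R by (elim conjE) blast
  qed
  have skew: "\<theta> g h = inverse (\<theta> h g)" for g h
  proof -
    obtain as where as0: "length as = length [g,h]" "\<forall>i<length [g,h]. as ! i \<in> A ([g,h] ! i)" "nprod as \<noteq> 0"
      using ex[of "[g,h]"] by blast
    have as: "length as = 2" "\<forall>i<2. as ! i \<in> A ([g,h] ! i)" "nprod as \<noteq> 0"
      using as0 by simp_all
    then obtain a b where ab: "as = [a,b]"
      using len2 by blast
    have a: "a \<in> A g" using as(2)[rule_format, of 0] ab by simp
    have b: "b \<in> A h" using as(2)[rule_format, of 1] ab by simp
    have n: "a * b \<noteq> 0" using as(3) ab by simp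
    have "a * b = scale (\<theta> g h) (scale (\<theta> h g) (a * b))"
      using com[OF a b] com[OF b a] by simp
    hence "scale 1 (a*b) = scale (\<theta> g h * \<theta> h g) (a * b)" by simp
    hence "1 = \<theta> g h * \<theta> h g" using n vs.scale_cancel_right by blast
    thus ?thesis using nz[of h g] by (simp add: field_simps)
  qed
  have lin1: "\<theta> (g + h) k = \<theta> g k * \<theta> h k" for g h k
  proof -
    obtain as where as0: "length as = length [g,h,k]" "\<forall>i<length [g,h,k]. as ! i \<in> A ([g,h,k] ! i)" "nprod as \<noteq> 0"
      using ex[of "[g,h,k]"] by blast
    have as: "length as = 3" "\<forall>i<3. as ! i \<in> A ([g,h,k] ! i)" "nprod as \<noteq> 0"
      using as0 by simp_all
    then obtain a b c where abc: "as = [a,b,c]"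
      using len3 by blast
    have a: "a \<in> A g" using as(2)[rule_format, of 0] abc by simp
    have b: "b \<in> A h" using as(2)[rule_format, of 1] abc by simp
    have c: "c \<in> A k" using as(2)[rule_format, of 2] abc by simp
    have n: "a * (b * c) \<noteq> 0" using as(3) abc by simp
    have e1: "a * (b * c) = scale (\<theta> (g+h) k) (c * (a * b))"
      using com[OF mul[OF a b] c] by (simp add: mult.assoc)
    have "a * (b * c) = a * scale (\<theta> h k) (c * b)" using com[OF b c] by simp
    also have "\<dots> = scale (\<theta> h k) ((a * c) * b)" by (simp only: sr[symmetric] mult.assoc)
    also have "\<dots> = scale (\<theta> h k) (scale (\<theta> g k) (c * a) * b)" using com[OF a c] by simp
    also have "\<dots> = scale (\<theta> g k * \<theta> h k) (c * (a * b))"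
      by (simp only: sl[symmetric] mult.assoc vs.scale_scale mult.commute)
    finally have e2: "a * (b * c) = scale (\<theta> g k * \<theta> h k) (c * (a * b))" .
    have "c * (a * b) \<noteq> 0" using n e1 by auto
    thus ?thesis using e1 e2 vs.scale_cancel_right[of "\<theta> (g+h) k" "c * (a * b)"] by simp
  qed
  have lin2: "\<theta> g (h + k) = \<theta> g h * \<theta> g k" for g h k
    using skew[of g "h+k"] lin1[of h k g] skew[of g h] skew[of g k]
    by (simp add: inverse_mult_distrib)
  show ?thesis
    unfolding skew_symmetric_bicharacter_def color_commutative_def
    using nz lin1 lin2 skew com by blast
qed

end
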